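(* Let $f:\mathbb{R}^n\to\mathbb{R}$ be twice differentiable with $\mu I\preceq \nabla^2 f(x)\preceq L I$ for all $x$ (where $0<\mu\le L$), and strongly self-concordant with constant $M\ge 0$. Let $\kappa=L/\mu$. Run the SR1 method with correction strategy: choose $x_0\in\mathbb{R}^n$, set $G_0=L\cdot I$, $r_{-1}=0$, and for $k=0,1,2,\dots$ set $x_{k+1}=x_k-G_k^{-1}\nabla f(x_k)$, $u_k=x_{k+1}-x_k$, $r_k=\|u_k\|_{x_k}$, $\widetilde G_k=\left(1+\frac{Mr_{k-1}}{2}\right)\left(1+\frac{Mr_k}{2}\right)G_k$, $J_k=\int_0^1\nabla^2 f(x_k+tu_k)\,dt$, and $G_{k+1}=\mathrm{SR1}(J_k,\widetilde G_k,u_k)$. Suppose $M\lambda_f(x_0)\le\frac{\ln(3/2)}{4\kappa}$. Then for all $k\ge0$, $$J_k\preceq\widetilde G_k\quad\text{and}\quad G_k\preceq 3\kappa\cdot\nabla^2 f(x_k).$$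
   Context: $f$ is strongly self-concordant with constant $M\ge0$ if $\nabla^2 f(y)-\nabla^2 f(x)\preceq M\|y-x\|_z\nabla^2 f(w)$ for all $x,y,z,w\in\mathbb{R}^n$, where $\|u\|_x=\sqrt{u^\top\nabla^2 f(x)u}$. $\lambda_f(x)=\langle\nabla f(x),[\nabla^2 f(x)]^{-1}\nabla f(x)\rangle^{1/2}$. For symmetric positive definite $A,G$ and $u\neq 0$, $\mathrm{SR1}(A,G,u)=G$ if $(G-A)u=0$, and otherwise $\mathrm{SR1}(A,G,u)=G-\frac{(G-A)uu^\top(G-A)}{u^\top(G-A)u}$. *)

theory Defs
  imports "HOL-Analysis.Analysis"
begin

definition loewner_le :: "real^'n^'n \<Rightarrow> real^'n^'n \<Rightarrow> bool" where
  "loewner_le A B \<longleftrightarrow> (\<forall>v. v \<bullet> (A *v v) \<le> v \<bullet> (B *v v))"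

definition local_norm :: "(real^'n \<Rightarrow> real^'n^'n) \<Rightarrow> real^'n \<Rightarrow> real^'n \<Rightarrow> real" where
  "local_norm H x u = sqrt (u \<bullet> (H x *v u))"

definition strongly_self_concordant :: "(real^'n \<Rightarrow> real^'n^'n) \<Rightarrow> real \<Rightarrow> bool" where
  "strongly_self_concordant H M \<longleftrightarrow>
     (\<forall>x y z w. loewner_le (H y - H x) ((M * local_norm H z (y - x)) *\<^sub>R H w))"

definition newton_decrement :: "(real^'n \<Rightarrow> real^'n) \<Rightarrow> (real^'n \<Rightarrow> real^'n^'n) \<Rightarrow> real^'n \<Rightarrow> real" where
  "newton_decrement g H x = sqrt (g x \<bullet> (matrix_inv (H x) *v g x))"

definition outer_prod :: "real^'n \<Rightarrow> real^'n \<Rightarrow> real^'n^'n" where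
  "outer_prod a b = (\<chi> i j. a $ i * b $ j)"

definition SR1 :: "real^'n^'n \<Rightarrow> real^'n^'n \<Rightarrow> real^'n \<Rightarrow> real^'n^'n" where
  "SR1 A G u = (if (G - A) *v u = 0 then G
      else G - (1 / (u \<bullet> ((G - A) *v u))) *\<^sub>R outer_prod ((G - A) *v u) (u v* (G - A)))"

end

theory Submission
  imports Defs
begin

lemma sym_inner:
  fixes A :: "real^'n^'n"
  assumes "transpose A = A"
  shows "x \<bullet> (A *v y) = (A *v x) \<bullet> y"
proof -
  have "x \<bullet> (A *v y) = (x v* A) \<bullet> y" by (simp add: dot_lmul_matrix)
  also have "x v* A = transpose A *v x" by simp
  finally show ?thesis using assms by simp
qed

lemma qf_scale[simp]:
  fixes A :: "real^'n^'n"
  shows "(c *\<^sub>R A) *v v = c *\<^sub>R (A *v v)"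
  by (simp add: scaleR_matrix_vector_assoc)

lemma real_quad_disc:
  fixes a b c :: real
  assumes "\<And>t. 0 \<le> a + 2*t*b + t^2*c" and "0 \<le> c"
  shows "b^2 \<le> a * c"
proof (cases "c = 0")
  case True
  show ?thesis
  proof (rule ccontr)
    assume "\<not> ?thesis"
    then have "b \<noteq> 0" using True by simp
    have "0 \<le> a + 2*(-(a+1)/(2*b))*b + (-(a+1)/(2*b))^2*c" by (rule assms(1))
    then show False using True \<open>b \<noteq> 0\<close> by (simp add: field_simps)
  qed
next
  case False
  then have cp: "c > 0" using assms(2) by simp
  have "0 \<le> a + 2*(-b/c)*b + (-b/c)^2*c" by (rule assms(1))
  then have "0 \<le> a - b^2/c" using cp by (simp add: field_simps power2_eq_square)
  then show ?thesis using cp by (simp add: field_simps)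
qed

lemma psd_cs:
  fixes S :: "real^'n^'n"
  assumes sym: "transpose S = S" and psd: "\<And>v. 0 \<le> v \<bullet> (S *v v)"
  shows "(x \<bullet> (S *v y))^2 \<le> (x \<bullet> (S *v x)) * (y \<bullet> (S *v y))"
proof -
  have e: "(x + t *\<^sub>R y) \<bullet> (S *v (x + t *\<^sub>R y)) = x \<bullet> (S *v x) + 2*t*(x \<bullet> (S *v y)) + t^2 * (y \<bullet> (S *v y))" for t
  proof -
    have "y \<bullet> (S *v x) = x \<bullet> (S *v y)" using sym_inner[OF sym, of y x] by (simp add: inner_commute)
    then show ?thesis
      by (simp add: matrix_vector_right_distrib matrix_vector_mult_scaleR inner_add_left inner_add_right power2_eq_square algebra_simps)
  qed
  show ?thesis
    by (rule real_quad_disc) (metis e psd, rule psd)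
qed

lemma inv_mat:
  fixes A :: "real^'n^'n"
  assumes "invertible A"
  shows "A ** matrix_inv A = mat 1" "matrix_inv A ** A = mat 1"
proof -
  have "\<exists>A'. A ** A' = mat 1 \<and> A' ** A = mat 1" using assms unfolding invertible_def by blast
  then have "A ** matrix_inv A = mat 1 \<and> matrix_inv A ** A = mat 1"
    unfolding matrix_inv_def by (rule someI_ex)
  then show "A ** matrix_inv A = mat 1" "matrix_inv A ** A = mat 1" by auto
qed

lemma inv_vec:
  fixes A :: "real^'n^'n"
  assumes "invertible A"
  shows "A *v (matrix_inv A *v y) = y" "matrix_inv A *v (A *v y) = y"
  using inv_mat[OF assms] by (simp_all add: matrix_vector_mul_assoc)

lemma inv_sym_inner:
  fixes A :: "real^'n^'n"
  assumes "transpose A = A" "invertible A"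
  shows "x \<bullet> (matrix_inv A *v y) = (matrix_inv A *v x) \<bullet> y"
proof -
  have "x \<bullet> (matrix_inv A *v y) = (A *v (matrix_inv A *v x)) \<bullet> (matrix_inv A *v y)"
    by (simp add: inv_vec[OF assms(2)])
  also have "\<dots> = (matrix_inv A *v x) \<bullet> (A *v (matrix_inv A *v y))"
    using sym_inner[OF assms(1)] by simp
  also have "\<dots> = (matrix_inv A *v x) \<bullet> y" by (simp add: inv_vec[OF assms(2)])
  finally show ?thesis .
qed

lemma pd_invertible:
  fixes A :: "real^'n^'n"
  assumes "m > 0" "\<And>v. m * (v \<bullet> v) \<le> v \<bullet> (A *v v)"
  shows "invertible A"
proof -
  have "\<forall>x. A *v x = 0 \<longrightarrow> x = 0"
  proof (intro allI impI)
    fix x assume "A *v x = 0"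
    then have "m * (x \<bullet> x) \<le> 0" using assms(2)[of x] by simp
    then have "x \<bullet> x \<le> 0" using assms(1) by (simp add: mult_le_0_iff)
    then show "x = 0" by (metis antisym inner_ge_zero inner_eq_zero_iff)
  qed
  then show ?thesis
    by (simp add: invertible_left_inverse matrix_left_invertible_ker)
qed

lemma inv_qf_nonneg:
  fixes A :: "real^'n^'n"
  assumes "transpose A = A" "invertible A" "\<And>v. 0 \<le> v \<bullet> (A *v v)"
  shows "0 \<le> x \<bullet> (matrix_inv A *v x)"
proof -
  have "x \<bullet> (matrix_inv A *v x) = (A *v (matrix_inv A *v x)) \<bullet> (matrix_inv A *v x)"
    by (simp add: inv_vec[OF assms(2)])
  also have "\<dots> = (matrix_inv A *v x) \<bullet> (A *v (matrix_inv A *v x))" by (simp add: inner_commute)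
  finally show ?thesis using assms(3) by simp
qed

lemma inv_mono:
  fixes A B :: "real^'n^'n"
  assumes symA: "transpose A = A" and symB: "transpose B = B"
    and invA: "invertible A" and invB: "invertible B"
    and psdA: "\<And>v. 0 \<le> v \<bullet> (A *v v)" and le: "\<And>v. v \<bullet> (A *v v) \<le> \<gamma> * (v \<bullet> (B *v v))"
    and gp: "\<gamma> > 0"
  shows "x \<bullet> (matrix_inv B *v x) \<le> \<gamma> * (x \<bullet> (matrix_inv A *v x))"
proof -
  define z where "z = matrix_inv B *v x"
  have Bz: "B *v z = x" by (simp add: z_def inv_vec[OF invB])
  define p where "p = x \<bullet> z"
  have p_eq: "p = z \<bullet> (B *v z)" by (simp add: p_def Bz inner_commute)
  have p_nn: "0 \<le> p"
  proof -
    have "0 \<le> z \<bullet> (A *v z)" by (rule psdA)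
    also have "\<dots> \<le> \<gamma> * (z \<bullet> (B *v z))" by (rule le)
    finally show ?thesis using p_eq gp by (simp add: zero_le_mult_iff)
  qed
  define q where "q = x \<bullet> (matrix_inv A *v x)"
  have q_nn: "0 \<le> q" unfolding q_def by (rule inv_qf_nonneg[OF symA invA psdA])
  have "p = (A *v (matrix_inv A *v x)) \<bullet> z" by (simp add: p_def inv_vec[OF invA])
  also have "\<dots> = (matrix_inv A *v x) \<bullet> (A *v z)" using sym_inner[OF symA] by simp
  finally have p2: "p = (matrix_inv A *v x) \<bullet> (A *v z)" .
  have "p^2 \<le> ((matrix_inv A *v x) \<bullet> (A *v (matrix_inv A *v x))) * (z \<bullet> (A *v z))"
    unfolding p2 by (rule psd_cs[OF symA psdA])
  also have "(matrix_inv A *v x) \<bullet> (A *v (matrix_inv A *v x)) = q"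
    by (simp add: q_def inv_vec[OF invA] inner_commute)
  finally have "p^2 \<le> q * (z \<bullet> (A *v z))" .
  also have "\<dots> \<le> q * (\<gamma> * p)" using le[of z] p_eq q_nn by (simp add: mult_left_mono)
  finally have "p^2 \<le> q * (\<gamma> * p)" .
  then have "p \<le> \<gamma> * q"
    using p_nn gp by (cases "p = 0") (auto simp: power2_eq_square q_nn algebra_simps zero_le_mult_iff)
  then show ?thesis by (simp add: z_def p_def q_def)
qed

lemma xcs:
  fixes J X :: "real^'n^'n"
  assumes symJ: "transpose J = J" and symX: "transpose X = X" and invJ: "invertible J"
    and psdJ: "\<And>v. 0 \<le> v \<bullet> (J *v v)" and psdX: "\<And>v. 0 \<le> v \<bullet> (X *v v)"
    and le: "\<And>v. v \<bullet> (X *v v) \<le> c * (v \<bullet> (J *v v))" and c: "c \<ge> 0"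
  shows "(X *v y) \<bullet> (matrix_inv J *v (X *v y)) \<le> c * (y \<bullet> (X *v y))"
proof -
  define z where "z = matrix_inv J *v (X *v y)"
  have Jz: "J *v z = X *v y" by (simp add: z_def inv_vec[OF invJ])
  define Q where "Q = (X *v y) \<bullet> z"
  have Q1: "Q = z \<bullet> (J *v z)" by (simp add: Q_def Jz inner_commute)
  have Qnn: "0 \<le> Q" using Q1 psdJ by simp
  have Q2: "Q = y \<bullet> (X *v z)" using sym_inner[OF symX, of y z] by (simp add: Q_def)
  have "Q^2 \<le> (y \<bullet> (X *v y)) * (z \<bullet> (X *v z))" unfolding Q2 by (rule psd_cs[OF symX psdX])
  also have "\<dots> \<le> (y \<bullet> (X *v y)) * (c * Q)" using le[of z] psdX[of y] Q1 by (simp add: mult_left_mono)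
  finally have "Q^2 \<le> (y \<bullet> (X *v y)) * (c * Q)" .
  then have "Q \<le> c * (y \<bullet> (X *v y))"
    using Qnn psdX[of y] c by (cases "Q = 0") (auto simp: power2_eq_square algebra_simps zero_le_mult_iff)
  then show ?thesis by (simp add: Q_def z_def)
qed


lemma transpose_diff': "transpose (A - B) = transpose A - transpose (B::real^'n^'n)"
  by (simp add: transpose_def vec_eq_iff)
lemma transpose_add': "transpose (A + B) = transpose A + transpose (B::real^'n^'n)"
  by (simp add: transpose_def vec_eq_iff)

lemma contraction:
  fixes J G :: "real^'n^'n"
  assumes symJ: "transpose J = J" and symG: "transpose G = G" and invJ: "invertible J"
    and psdJ: "\<And>v. 0 \<le> v \<bullet> (J *v v)"
    and th: "0 \<le> \<theta>" "\<theta> < 1"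
    and lo: "\<And>v. (1/(1+\<theta>)) * (v \<bullet> (J *v v)) \<le> v \<bullet> (G *v v)"
    and hi: "\<And>v. v \<bullet> (G *v v) \<le> (1/(1-\<theta>)) * (v \<bullet> (J *v v))"
  shows "(G *v z - J *v z) \<bullet> (matrix_inv J *v (G *v z - J *v z)) \<le> \<theta>^2 * ((G *v z) \<bullet> (matrix_inv J *v (G *v z)))"
proof -
  define p1 where "p1 = 1/(1+\<theta>)"
  define p2 where "p2 = 1/(1-\<theta>)"
  define X where "X = G - p1 *\<^sub>R J"
  have symX: "transpose X = X" by (simp add: X_def transpose_diff' transpose_scalar symG symJ)
  have Xv: "X *v v = G *v v - p1 *\<^sub>R (J *v v)" for v by (simp add: X_def matrix_vector_mult_diff_rdistrib)
  have psdX: "0 \<le> v \<bullet> (X *v v)" for v using lo[of v] by (simp add: Xv inner_diff_right p1_def)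
  have leX: "v \<bullet> (X *v v) \<le> (p2 - p1) * (v \<bullet> (J *v v))" for v
    using hi[of v] by (simp add: Xv inner_diff_right p2_def algebra_simps)
  have p12: "p1 \<le> p2" using th by (simp add: p1_def p2_def field_simps)
  have key: "(X *v z) \<bullet> (matrix_inv J *v (X *v z)) \<le> (p2 - p1) * (z \<bullet> (X *v z))"
    by (rule xcs[OF symJ symX invJ psdJ psdX leX]) (use p12 in simp)
  define w where "w = G *v z"
  define j where "j = J *v z"
  have Jij: "matrix_inv J *v j = z" by (simp add: j_def inv_vec[OF invJ])
  have jJiw: "j \<bullet> (matrix_inv J *v w) = z \<bullet> w"
  proof -
    have "j \<bullet> (matrix_inv J *v w) = z \<bullet> (J *v (matrix_inv J *v w))"
      using sym_inner[OF symJ, of z "matrix_inv J *v w"] by (simp add: j_def)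
    then show ?thesis by (simp add: inv_vec[OF invJ])
  qed
  have wJij: "w \<bullet> (matrix_inv J *v j) = z \<bullet> w" by (simp add: Jij inner_commute)
  define A where "A = w \<bullet> (matrix_inv J *v w)"
  define B where "B = z \<bullet> w"
  define C where "C = z \<bullet> j"
  have Xz: "X *v z = w - p1 *\<^sub>R j" by (simp add: Xv w_def j_def)
  have lhs: "(X *v z) \<bullet> (matrix_inv J *v (X *v z)) = A - 2*p1*B + p1^2 * C"
    unfolding Xz by (simp add: matrix_vector_mult_diff_distrib matrix_vector_mult_scaleR inner_diff_left inner_diff_right
      jJiw wJij Jij A_def B_def C_def power2_eq_square algebra_simps inner_commute)
  have zXz: "z \<bullet> (X *v z) = B - p1 * C" by (simp add: Xz inner_diff_right B_def C_def)
  have goal_l: "(G *v z - J *v z) \<bullet> (matrix_inv J *v (G *v z - J *v z)) = A - 2*B + C"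
    unfolding w_def[symmetric] j_def[symmetric]
    by (simp add: matrix_vector_mult_diff_distrib inner_diff_left inner_diff_right
      jJiw wJij Jij A_def B_def C_def algebra_simps inner_commute)
  have ineq: "A - 2*p1*B + p1^2 * C \<le> (p2 - p1) * (B - p1 * C)" using key lhs zXz by simp
  have tt: "\<theta> * \<theta> < 1" using mult_strict_mono[of \<theta> 1 \<theta> 1] th by simp
  have f1: "(1 - \<theta>^2) * p1 = 1 - \<theta>" "(1 - \<theta>^2) * p2 = 1 + \<theta>" "(1-\<theta>^2)*p1*p2 = 1" "(1-\<theta>)*p2 = 1"
    using th tt by (simp_all add: p1_def p2_def field_simps power2_eq_square)
  have "A \<le> (p1 + p2) * B - p1 * p2 * C" using ineq by (simp add: algebra_simps power2_eq_square)
  then have "(1 - \<theta>^2) * A \<le> (1-\<theta>^2) * ((p1 + p2) * B - p1 * p2 * C)"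
    using th by (intro mult_left_mono) (auto simp: power2_eq_square mult_le_one)
  also have "\<dots> = ((1 - \<theta>^2) * p1 + (1-\<theta>^2)*p2) * B - ((1-\<theta>^2)*p1*p2) * C" by (simp add: algebra_simps)
  also have "\<dots> = 2 * B - C" unfolding f1 by simp
  finally have "(1 - \<theta>^2) * A \<le> 2 * B - C" .
  then have "A - 2*B + C \<le> \<theta>^2 * A" by (simp add: algebra_simps)
  then show ?thesis by (simp add: goal_l A_def w_def)
qed

lemma outer_vec: "outer_prod w w *v v = (w \<bullet> v) *\<^sub>R w"
  by (simp add: outer_prod_def matrix_vector_mult_def inner_vec_def vec_eq_iff sum_distrib_left algebra_simps)

lemma outer_sym: "transpose (outer_prod w w) = outer_prod w w"
  by (simp add: outer_prod_def transpose_def vec_eq_iff mult.commute)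

lemma SR1_props:
  fixes A G :: "real^'n^'n"
  assumes symA: "transpose A = A" and symG: "transpose G = G"
    and le: "\<And>v. v \<bullet> (A *v v) \<le> v \<bullet> (G *v v)"
  shows "transpose (SR1 A G u) = SR1 A G u"
    "\<And>v. v \<bullet> (A *v v) \<le> v \<bullet> (SR1 A G u *v v)"
    "\<And>v. v \<bullet> (SR1 A G u *v v) \<le> v \<bullet> (G *v v)"
proof -
  define D where "D = G - A"
  have symD: "transpose D = D" by (simp add: D_def transpose_diff' symA symG)
  have psdD: "0 \<le> v \<bullet> (D *v v)" for v using le[of v] by (simp add: D_def matrix_vector_mult_diff_rdistrib inner_diff_right)
  define w where "w = D *v u"
  have uD: "u v* D = w" by (metis symD transpose_matrix_vector w_def)
  define c where "c = u \<bullet> (D *v u)"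
  have cw: "u \<bullet> w = c" by (simp add: c_def w_def)
  have "transpose (SR1 A G u) = SR1 A G u \<and> (\<forall>v. v \<bullet> (A *v v) \<le> v \<bullet> (SR1 A G u *v v)) \<and> (\<forall>v. v \<bullet> (SR1 A G u *v v) \<le> v \<bullet> (G *v v))"
  proof (cases "w = 0")
    case True
    then have "SR1 A G u = G" by (simp add: SR1_def D_def[symmetric] w_def[symmetric])
    then show ?thesis using symG le by simp
  next
    case False
    have cpos: "c > 0"
    proof (rule ccontr)
      assume "\<not> c > 0"
      then have c0: "c = 0" using psdD[of u] by (simp add: c_def)
      have "(w \<bullet> (D *v u))^2 \<le> (w \<bullet> (D *v w)) * (u \<bullet> (D *v u))" by (rule psd_cs[OF symD psdD])
      then have "(w \<bullet> w)^2 \<le> 0" using c0 by (simp add: c_def w_def)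
      then have "w \<bullet> w = 0" by simp
      then show False using False by simp
    qed
    have S: "SR1 A G u = G - (1/c) *\<^sub>R outer_prod w w"
      using False by (simp add: SR1_def D_def[symmetric] w_def[symmetric] uD cw)
    have Sv: "SR1 A G u *v v = G *v v - ((1/c) * (w \<bullet> v)) *\<^sub>R w" for v
      by (simp add: S matrix_vector_mult_diff_rdistrib outer_vec)
    have q: "v \<bullet> (SR1 A G u *v v) = v \<bullet> (G *v v) - (w \<bullet> v)^2 / c" for v
      by (simp add: Sv inner_diff_right power2_eq_square inner_commute)
    have t1: "transpose (SR1 A G u) = SR1 A G u"
      by (simp add: S transpose_diff' transpose_scalar symG outer_sym)
    have t2: "v \<bullet> (A *v v) \<le> v \<bullet> (SR1 A G u *v v)" for v
    proof -
      have cs: "(v \<bullet> (D *v u))^2 \<le> (v \<bullet> (D *v v)) * c" unfolding c_def by (rule psd_cs[OF symD psdD])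
      have "w \<bullet> v = v \<bullet> (D *v u)" by (simp add: w_def inner_commute)
      then have "(w \<bullet> v)^2 / c \<le> v \<bullet> (D *v v)" using cs cpos by (simp add: divide_le_eq)
      then show ?thesis by (simp add: q D_def matrix_vector_mult_diff_rdistrib inner_diff_right)
    qed
    have t3: "v \<bullet> (SR1 A G u *v v) \<le> v \<bullet> (G *v v)" for v
      using cpos by (simp add: q)
    show ?thesis using t1 t2 t3 by blast
  qed
  then show "transpose (SR1 A G u) = SR1 A G u"
    "\<And>v. v \<bullet> (A *v v) \<le> v \<bullet> (SR1 A G u *v v)"
    "\<And>v. v \<bullet> (SR1 A G u *v v) \<le> v \<bullet> (G *v v)" by blast+
qed


lemma hess_half:
  fixes f :: "real^'n \<Rightarrow> real" and g :: "real^'n \<Rightarrow> real^'n" and Hx :: "real^'n^'n"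
  assumes grad: "\<And>y. (f has_derivative (\<lambda>h. g y \<bullet> h)) (at y)"
    and hx: "(g has_derivative (\<lambda>h. Hx *v h)) (at x)"
    and e: "e > 0"
  shows "\<exists>d>0. \<forall>t. 0 < t \<and> t < d \<longrightarrow>
     \<bar>f (x + t *\<^sub>R h + t *\<^sub>R k) - f (x + t *\<^sub>R h) - f (x + t *\<^sub>R k) + f x - t^2 * (h \<bullet> (Hx *v k))\<bar> \<le> e * t^2"
proof -
  define C where "C = norm h * (2 * norm h + norm k) + 1"
  have Cpos: "C > 0" unfolding C_def by (intro add_nonneg_pos mult_nonneg_nonneg) auto
  have "e / C > 0" using e Cpos by simp
  then obtain d where d: "d > 0"
    "\<And>y. norm (y - x) < d \<Longrightarrow> norm (g y - g x - Hx *v (y - x)) \<le> (e / C) * norm (y - x)"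
    using hx[unfolded has_derivative_at_alt] by meson
  define N where "N = norm h + norm k + 1"
  have Npos: "N > 0" unfolding N_def by (intro add_nonneg_pos add_nonneg_nonneg) auto
  define d' where "d' = d / N"
  show ?thesis
  proof (intro exI[of _ d'] conjI allI impI)
    show "d' > 0" using d Npos by (simp add: d'_def)
    fix t assume t: "0 < t \<and> t < d'"
    define \<psi> where "\<psi> = (\<lambda>s. f (x + s *\<^sub>R h + t *\<^sub>R k) - f (x + s *\<^sub>R h))"
    have der: "(\<psi> has_derivative (\<lambda>s'. (g (x + s *\<^sub>R h + t *\<^sub>R k) - g (x + s *\<^sub>R h)) \<bullet> (s' *\<^sub>R h))) (at s within {0..t})" for s
    proof -
      have i1: "((\<lambda>s. x + s *\<^sub>R h + t *\<^sub>R k) has_derivative (\<lambda>s'. s' *\<^sub>R h)) (at s within {0..t})"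
        by (auto intro!: derivative_eq_intros)
      have i2: "((\<lambda>s. x + s *\<^sub>R h) has_derivative (\<lambda>s'. s' *\<^sub>R h)) (at s within {0..t})"
        by (auto intro!: derivative_eq_intros)
      note c1 = has_derivative_compose[OF i1 grad]
      note c2 = has_derivative_compose[OF i2 grad]
      show ?thesis unfolding \<psi>_def inner_diff_left
        by (rule has_derivative_diff[OF c1 c2])
    qed
    obtain \<xi> where xi: "\<xi> \<in> {0<..<t}"
      "\<psi> t - \<psi> 0 = (g (x + \<xi> *\<^sub>R h + t *\<^sub>R k) - g (x + \<xi> *\<^sub>R h)) \<bullet> ((t - 0) *\<^sub>R h)"
      using mvt_simple[of 0 t \<psi>, OF _ der] t by auto
    define y1 where "y1 = \<xi> *\<^sub>R h + t *\<^sub>R k"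
    define y2 where "y2 = \<xi> *\<^sub>R h"
    have xi0: "0 < \<xi>" "\<xi> < t" using xi by auto
    have ny1: "norm y1 \<le> t * norm h + t * norm k"
    proof -
      have "norm y1 \<le> norm (\<xi> *\<^sub>R h) + norm (t *\<^sub>R k)" unfolding y1_def by (rule norm_triangle_ineq)
      also have "\<dots> \<le> t * norm h + t * norm k" using xi0 t by (simp add: mult_right_mono)
      finally show ?thesis .
    qed
    have ny2: "norm y2 \<le> t * norm h" using xi0 by (simp add: y2_def mult_right_mono)
    have tN: "t * N < d" using t Npos by (simp add: d'_def pos_less_divide_eq)
    have "t * norm h + t * norm k \<le> t * N" using t by (simp add: N_def algebra_simps)
    then have ly1: "norm y1 < d" using ny1 tN by linarith
    have "t * norm h \<le> t * N" using t by (simp add: N_def algebra_simps)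
    then have ly2: "norm y2 < d" using ny2 tN by linarith
    define R1 where "R1 = g (x + y1) - g x - Hx *v y1"
    define R2 where "R2 = g (x + y2) - g x - Hx *v y2"
    have b1: "norm R1 \<le> (e / C) * norm y1" using d(2)[of "x + y1"] ly1 by (simp add: R1_def)
    have b2: "norm R2 \<le> (e / C) * norm y2" using d(2)[of "x + y2"] ly2 by (simp add: R2_def)
    have gd: "g (x + y1) - g (x + y2) = t *\<^sub>R (Hx *v k) + (R1 - R2)"
      by (simp add: R1_def R2_def y1_def y2_def matrix_vector_right_distrib matrix_vector_mult_scaleR algebra_simps)
    have \<Delta>: "f (x + t *\<^sub>R h + t *\<^sub>R k) - f (x + t *\<^sub>R h) - f (x + t *\<^sub>R k) + f x = \<psi> t - \<psi> 0"
      by (simp add: \<psi>_def)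
    also have "\<dots> = t * ((g (x + y1) - g (x + y2)) \<bullet> h)"
      using xi(2) by (simp add: y1_def y2_def add.assoc)
    also have "\<dots> = t^2 * (h \<bullet> (Hx *v k)) + t * ((R1 - R2) \<bullet> h)"
      by (simp add: gd inner_add_left power2_eq_square inner_commute algebra_simps)
    finally have De: "f (x + t *\<^sub>R h + t *\<^sub>R k) - f (x + t *\<^sub>R h) - f (x + t *\<^sub>R k) + f x - t^2 * (h \<bullet> (Hx *v k)) = t * ((R1 - R2) \<bullet> h)"
      by simp
    have "\<bar>t * ((R1 - R2) \<bullet> h)\<bar> \<le> t * (norm (R1 - R2) * norm h)"
      using t by (simp add: abs_mult Cauchy_Schwarz_ineq2 mult_left_mono)
    also have "\<dots> \<le> t * (((e / C) * norm y1 + (e / C) * norm y2) * norm h)"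
    proof -
      have "norm (R1 - R2) \<le> norm R1 + norm R2" by (rule norm_triangle_ineq4)
      also have "\<dots> \<le> (e / C) * norm y1 + (e / C) * norm y2" using b1 b2 by linarith
      finally show ?thesis using t by (simp add: mult_right_mono mult_left_mono)
    qed
    also have "\<dots> \<le> t * (((e / C) * (t * norm h + t * norm k) + (e / C) * (t * norm h)) * norm h)"
    proof -
      have "(e / C) * norm y1 + (e / C) * norm y2 \<le> (e / C) * (t * norm h + t * norm k) + (e / C) * (t * norm h)"
        using ny1 ny2 \<open>e / C > 0\<close> by (intro add_mono mult_left_mono) auto
      then show ?thesis using t by (simp add: mult_right_mono mult_left_mono)
    qed
    also have "\<dots> = e * t^2 * ((norm h * (2 * norm h + norm k)) / C)"
      using Cpos by (simp add: power2_eq_square field_simps)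
    also have "\<dots> \<le> e * t^2 * 1"
    proof -
      have "(norm h * (2 * norm h + norm k)) / C \<le> 1" using Cpos by (simp add: C_def)
      moreover have "0 \<le> e * t^2" using e by simp
      ultimately show ?thesis by (rule mult_left_mono)
    qed
    finally show "\<bar>f (x + t *\<^sub>R h + t *\<^sub>R k) - f (x + t *\<^sub>R h) - f (x + t *\<^sub>R k) + f x - t^2 * (h \<bullet> (Hx *v k))\<bar> \<le> e * t^2"
      unfolding De by simp
  qed
qed

lemma hess_sym_inner:
  fixes f :: "real^'n \<Rightarrow> real" and g :: "real^'n \<Rightarrow> real^'n" and Hx :: "real^'n^'n"
  assumes grad: "\<And>y. (f has_derivative (\<lambda>h. g y \<bullet> h)) (at y)"
    and hx: "(g has_derivative (\<lambda>h. Hx *v h)) (at x)"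
  shows "h \<bullet> (Hx *v k) = k \<bullet> (Hx *v h)"
proof (rule ccontr)
  assume ne: "h \<bullet> (Hx *v k) \<noteq> k \<bullet> (Hx *v h)"
  define e where "e = \<bar>h \<bullet> (Hx *v k) - k \<bullet> (Hx *v h)\<bar> / 3"
  have e: "e > 0" using ne by (simp add: e_def)
  obtain d1 where d1: "d1 > 0" "\<forall>t. 0 < t \<and> t < d1 \<longrightarrow>
     \<bar>f (x + t *\<^sub>R h + t *\<^sub>R k) - f (x + t *\<^sub>R h) - f (x + t *\<^sub>R k) + f x - t^2 * (h \<bullet> (Hx *v k))\<bar> \<le> e * t^2"
    using hess_half[OF grad hx e, of h k] by blast
  obtain d2 where d2: "d2 > 0" "\<forall>t. 0 < t \<and> t < d2 \<longrightarrow>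
     \<bar>f (x + t *\<^sub>R k + t *\<^sub>R h) - f (x + t *\<^sub>R k) - f (x + t *\<^sub>R h) + f x - t^2 * (k \<bullet> (Hx *v h))\<bar> \<le> e * t^2"
    using hess_half[OF grad hx e, of k h] by blast
  define t where "t = min d1 d2 / 2"
  have t: "0 < t" "t < d1" "t < d2" using d1 d2 by (auto simp: t_def)
  have A: "\<bar>f (x + t *\<^sub>R h + t *\<^sub>R k) - f (x + t *\<^sub>R h) - f (x + t *\<^sub>R k) + f x - t^2 * (h \<bullet> (Hx *v k))\<bar> \<le> e * t^2"
    using d1 t by blast
  have B: "\<bar>f (x + t *\<^sub>R h + t *\<^sub>R k) - f (x + t *\<^sub>R h) - f (x + t *\<^sub>R k) + f x - t^2 * (k \<bullet> (Hx *v h))\<bar> \<le> e * t^2"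
  proof -
    have B0: "\<bar>f (x + t *\<^sub>R k + t *\<^sub>R h) - f (x + t *\<^sub>R k) - f (x + t *\<^sub>R h) + f x - t^2 * (k \<bullet> (Hx *v h))\<bar> \<le> e * t^2"
      using d2 t by blast
    have eq: "x + t *\<^sub>R k + t *\<^sub>R h = x + t *\<^sub>R h + t *\<^sub>R k" by (simp add: algebra_simps)
    show ?thesis using B0 unfolding eq abs_le_iff by linarith
  qed
  have "\<bar>t^2 * (h \<bullet> (Hx *v k) - k \<bullet> (Hx *v h))\<bar> \<le> 2 * e * t^2" using A B by (simp add: abs_le_iff algebra_simps)
  moreover have "\<bar>t^2 * (h \<bullet> (Hx *v k) - k \<bullet> (Hx *v h))\<bar> = t^2 * \<bar>h \<bullet> (Hx *v k) - k \<bullet> (Hx *v h)\<bar>" by (simp add: abs_mult)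
  moreover have "2 * e * t^2 = t^2 * (2 * e)" by simp
  ultimately have "t^2 * \<bar>h \<bullet> (Hx *v k) - k \<bullet> (Hx *v h)\<bar> \<le> t^2 * (2 * e)" by simp
  then have "\<bar>h \<bullet> (Hx *v k) - k \<bullet> (Hx *v h)\<bar> \<le> 2 * e" using t by simp
  then show False using e by (simp add: e_def)
qed

lemma axis_entry: "axis i 1 \<bullet> ((A::real^'n^'n) *v axis j 1) = A $ i $ j"
  by (simp add: matrix_vector_mult_basis inner_commute[of "axis i 1"] inner_axis column_def)

lemma hess_sym:
  fixes f :: "real^'n \<Rightarrow> real" and g :: "real^'n \<Rightarrow> real^'n" and Hx :: "real^'n^'n"
  assumes grad: "\<And>y. (f has_derivative (\<lambda>h. g y \<bullet> h)) (at y)"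
    and hx: "(g has_derivative (\<lambda>h. Hx *v h)) (at x)"
  shows "transpose Hx = Hx"
proof -
  have "Hx $ i $ j = Hx $ j $ i" for i j
    using hess_sym_inner[OF grad hx, of "axis i 1" "axis j 1"] by (simp add: axis_entry)
  then show ?thesis by (simp add: transpose_def vec_eq_iff)
qed


lemma qf_diff: "v \<bullet> ((A - B) *v v) = v \<bullet> (A *v v) - v \<bullet> ((B::real^'n^'n) *v v)"
  by (simp add: matrix_vector_mult_diff_rdistrib inner_diff_right)

lemma mv_neg: "(A::real^'n^'n) *v (- w) = - (A *v w)"
  by (simp add: matrix_vector_mult_def vec_eq_iff sum_negf)

lemma local_norm_le:
  fixes H :: "real^'n \<Rightarrow> real^'n^'n"
  assumes upper: "\<And>y v. v \<bullet> (H y *v v) \<le> L * (v \<bullet> v)"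
  shows "local_norm H z w \<le> sqrt L * norm w"
proof -
  have "local_norm H z w \<le> sqrt (L * (w \<bullet> w))" unfolding local_norm_def using upper by (simp add: real_sqrt_le_mono)
  also have "\<dots> = sqrt L * norm w" by (simp add: real_sqrt_mult norm_eq_sqrt_inner)
  finally show ?thesis .
qed

lemma local_norm_neg: "local_norm H z (- w) = local_norm H z w"
  by (simp add: local_norm_def mv_neg)

lemma local_norm_scale: "local_norm H z (c *\<^sub>R w) = \<bar>c\<bar> * local_norm H z w"
proof -
  have eq: "(c *\<^sub>R w) \<bullet> (H z *v (c *\<^sub>R w)) = (c*c) * (w \<bullet> (H z *v w))" by (simp add: matrix_vector_mult_scaleR)
  show ?thesis unfolding local_norm_def eq real_sqrt_mult[of "c*c"] real_sqrt_abs2 ..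
qed

lemma ssc_qf:
  assumes "strongly_self_concordant H M"
  shows "v \<bullet> (H y *v v) - v \<bullet> (H x *v v) \<le> M * local_norm H z (y - x) * (v \<bullet> (H w *v v))"
  using assms unfolding strongly_self_concordant_def loewner_le_def
  by (metis qf_diff qf_scale inner_scaleR_right)

lemma H_qf_lip:
  fixes H :: "real^'n \<Rightarrow> real^'n^'n"
  assumes upper: "\<And>y v. v \<bullet> (H y *v v) \<le> L * (v \<bullet> v)" and psd: "\<And>y v. 0 \<le> v \<bullet> (H y *v v)"
    and ssc: "strongly_self_concordant H M" and M: "M \<ge> 0" and L: "L \<ge> 0"
  shows "\<bar>v \<bullet> (H b *v v) - v \<bullet> (H a *v v)\<bar> \<le> M * sqrt L * L * norm (b - a) * (v \<bullet> v)"
proof -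
  have one: "v \<bullet> (H y *v v) - v \<bullet> (H x *v v) \<le> M * sqrt L * L * norm (y - x) * (v \<bullet> v)" for x y
  proof -
    have "v \<bullet> (H y *v v) - v \<bullet> (H x *v v) \<le> M * local_norm H x (y - x) * (v \<bullet> (H x *v v))"
      by (rule ssc_qf[OF ssc])
    also have "\<dots> \<le> M * (sqrt L * norm (y - x)) * (L * (v \<bullet> v))"
    proof (intro mult_mono mult_left_mono)
      show "local_norm H x (y - x) \<le> sqrt L * norm (y - x)" by (rule local_norm_le[OF upper])
      show "v \<bullet> (H x *v v) \<le> L * (v \<bullet> v)" by (rule upper)
    qed (use M L psd in \<open>auto simp: local_norm_def\<close>)
    finally show ?thesis by (simp add: algebra_simps)
  qed
  show ?thesis using one[of a b] one[of b a] by (simp add: abs_le_iff norm_minus_commute)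
qed

lemma H_entry_lip:
  fixes H :: "real^'n \<Rightarrow> real^'n^'n"
  assumes symH: "\<And>y. transpose (H y) = H y"
    and upper: "\<And>y v. v \<bullet> (H y *v v) \<le> L * (v \<bullet> v)" and psd: "\<And>y v. 0 \<le> v \<bullet> (H y *v v)"
    and ssc: "strongly_self_concordant H M" and M: "M \<ge> 0" and L: "L \<ge> 0"
  shows "\<bar>H b $ i $ j - H a $ i $ j\<bar> \<le> 2 * (M * sqrt L * L) * norm (b - a)"
proof -
  define K where "K = M * sqrt L * L * norm (b - a)"
  have Kn: "K \<ge> 0" using M L by (simp add: K_def)
  define D where "D = H b - H a"
  have symD: "transpose D = D" by (simp add: D_def transpose_diff' symH)
  have qD: "\<bar>v \<bullet> (D *v v)\<bar> \<le> K * (v \<bullet> v)" for v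
    using H_qf_lip[OF upper psd ssc M L, of v b a] by (simp add: D_def qf_diff K_def)
  define p where "p = axis i (1::real)"
  define q where "q = axis j (1::real)"
  have pol: "(p + q) \<bullet> (D *v (p + q)) - (p - q) \<bullet> (D *v (p - q)) = 4 * (p \<bullet> (D *v q))"
  proof -
    have "q \<bullet> (D *v p) = p \<bullet> (D *v q)" using sym_inner[OF symD, of q p] by (simp add: inner_commute)
    then show ?thesis by (simp add: matrix_vector_right_distrib matrix_vector_mult_diff_distrib inner_add_left inner_add_right inner_diff_left inner_diff_right)
  qed
  have n1: "(p + q) \<bullet> (p + q) \<le> 4"
  proof -
    have "(p + q) \<bullet> (p + q) = norm (p + q) ^ 2" by (simp add: power2_norm_eq_inner)
    also have "\<dots> \<le> (norm p + norm q) ^ 2" by (simp add: norm_triangle_ineq power_mono)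
    finally show ?thesis by (simp add: p_def q_def)
  qed
  have n2: "(p - q) \<bullet> (p - q) \<le> 4"
  proof -
    have "(p - q) \<bullet> (p - q) = norm (p - q) ^ 2" by (simp add: power2_norm_eq_inner)
    also have "\<dots> \<le> (norm p + norm q) ^ 2" by (simp add: norm_triangle_ineq4 power_mono)
    finally show ?thesis by (simp add: p_def q_def)
  qed
  have a1: "\<bar>(p + q) \<bullet> (D *v (p + q))\<bar> \<le> K * 4"
    using qD[of "p + q"] mult_left_mono[OF n1 Kn] by linarith
  have a2: "\<bar>(p - q) \<bullet> (D *v (p - q))\<bar> \<le> K * 4"
    using qD[of "p - q"] mult_left_mono[OF n2 Kn] by linarith
  have "\<bar>4 * (p \<bullet> (D *v q))\<bar> \<le> 8 * K" using a1 a2 pol by (simp add: abs_le_iff)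
  then have "\<bar>p \<bullet> (D *v q)\<bar> \<le> 2 * K" by simp
  moreover have "p \<bullet> (D *v q) = H b $ i $ j - H a $ i $ j" by (simp add: p_def q_def axis_entry D_def)
  ultimately show ?thesis by (simp add: K_def)
qed


lemma H_cont:
  fixes H :: "real^'n \<Rightarrow> real^'n^'n"
  assumes symH: "\<And>y. transpose (H y) = H y"
    and upper: "\<And>y v. v \<bullet> (H y *v v) \<le> L * (v \<bullet> v)" and psd: "\<And>y v. 0 \<le> v \<bullet> (H y *v v)"
    and ssc: "strongly_self_concordant H M" and M: "M \<ge> 0" and L: "L \<ge> 0"
  shows "continuous_on S H"
proof -
  have ent: "continuous_on S (\<lambda>y. H y $ i $ j)" for i j
  proof (rule lipschitz_on_continuous_on)
    show "(2 * (M * sqrt L * L))-lipschitz_on S (\<lambda>y. H y $ i $ j)"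
    proof (rule lipschitz_onI)
      fix a b show "dist (H a $ i $ j) (H b $ i $ j) \<le> 2 * (M * sqrt L * L) * dist a b"
        using H_entry_lip[OF symH upper psd ssc M L, of a i j b] by (simp add: dist_norm dist_real_def)
    qed (use M L in simp)
  qed
  have "continuous_on S (\<lambda>y. \<chi> i. \<chi> j. H y $ i $ j)"
    by (intro continuous_on_vec_lambda ent)
  then show ?thesis by simp
qed

lemma line_cont:
  fixes H :: "real^'n \<Rightarrow> real^'n^'n" and x u :: "real^'n"
  assumes "continuous_on UNIV H"
  shows "continuous_on S (\<lambda>t::real. H (x + t *\<^sub>R u))"
proof (rule continuous_on_compose2[OF assms])
  show "continuous_on S (\<lambda>t::real. x + t *\<^sub>R u)"
    by (rule continuous_on_add[OF continuous_on_const continuous_on_scaleR[OF continuous_on_id continuous_on_const]])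
qed auto

lemma bl_qf: "bounded_linear (\<lambda>A::real^'n^'n. v \<bullet> (A *v v))"
proof -
  have "linear (\<lambda>A::real^'n^'n. v \<bullet> (A *v v))"
    by (rule linearI) (simp_all add: matrix_vector_mult_add_rdistrib inner_add_right)
  then show ?thesis by (simp add: linear_conv_bounded_linear)
qed

lemma bl_mv: "bounded_linear (\<lambda>A::real^'n^'n. A *v v)"
proof -
  have "linear (\<lambda>A::real^'n^'n. A *v v)"
    by (rule linearI) (simp_all add: matrix_vector_mult_add_rdistrib)
  then show ?thesis by (simp add: linear_conv_bounded_linear)
qed

lemma bl_tr: "bounded_linear (\<lambda>A::real^'n^'n. transpose A)"
proof -
  have "linear (\<lambda>A::real^'n^'n. transpose A)"
    by (rule linearI) (simp_all add: transpose_add' transpose_scalar)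
  then show ?thesis by (simp add: linear_conv_bounded_linear)
qed

lemma qf_integral:
  fixes F :: "'a::euclidean_space \<Rightarrow> real^'n^'n"
  assumes "F integrable_on S"
  shows "v \<bullet> (integral S F *v v) = integral S (\<lambda>t. v \<bullet> (F t *v v))"
  using integral_linear[OF assms bl_qf, of v] by (simp add: comp_def)

lemma mv_integral:
  fixes F :: "'a::euclidean_space \<Rightarrow> real^'n^'n"
  assumes "F integrable_on S"
  shows "integral S F *v v = integral S (\<lambda>t. F t *v v)"
  using integral_linear[OF assms bl_mv, of v] by (simp add: comp_def)

lemma tr_integral:
  fixes F :: "'a::euclidean_space \<Rightarrow> real^'n^'n"
  assumes "F integrable_on S" "\<And>t. transpose (F t) = F t"
  shows "transpose (integral S F) = integral S F"
proof -
  have "(\<lambda>A. transpose A) \<circ> F = F" by (rule ext) (simp add: assms(2))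
  then show ?thesis using integral_linear[OF assms(1) bl_tr] by simp
qed

lemma qf_integrable:
  fixes F :: "'a::euclidean_space \<Rightarrow> real^'n^'n"
  assumes "F integrable_on S"
  shows "(\<lambda>t. v \<bullet> (F t *v v)) integrable_on S"
  using integrable_linear[OF assms bl_qf, of v] by (simp add: comp_def)

lemma g_ftc:
  fixes g :: "real^'n \<Rightarrow> real^'n"
  assumes hess: "\<And>y. (g has_derivative (\<lambda>h. H y *v h)) (at y)"
    and Hc: "continuous_on UNIV H"
  shows "g (x + u) - g x = integral {0..1} (\<lambda>t. H (x + t *\<^sub>R u)) *v u"
proof -
  have der: "((\<lambda>t. g (x + t *\<^sub>R u)) has_vector_derivative (H (x + t *\<^sub>R u) *v u)) (at t within {0..1})" for t
  proof -
    have i: "((\<lambda>t. x + t *\<^sub>R u) has_derivative (\<lambda>s. s *\<^sub>R u)) (at t within {0..1})"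
      by (auto intro!: derivative_eq_intros)
    have "((\<lambda>t. g (x + t *\<^sub>R u)) has_derivative (\<lambda>s. H (x + t *\<^sub>R u) *v (s *\<^sub>R u))) (at t within {0..1})"
      by (rule has_derivative_compose[OF i hess])
    moreover have "(\<lambda>s. H (x + t *\<^sub>R u) *v (s *\<^sub>R u)) = (\<lambda>s. s *\<^sub>R (H (x + t *\<^sub>R u) *v u))"
      by (simp add: matrix_vector_mult_scaleR)
    ultimately show ?thesis by (simp add: has_vector_derivative_def)
  qed
  have "((\<lambda>t. H (x + t *\<^sub>R u) *v u) has_integral (g (x + 1 *\<^sub>R u) - g (x + 0 *\<^sub>R u))) {0..1}"
    by (rule fundamental_theorem_of_calculus) (use der in auto)
  then have "integral {0..1} (\<lambda>t. H (x + t *\<^sub>R u) *v u) = g (x + u) - g x" by (simp add: integral_unique)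
  moreover have "(\<lambda>t. H (x + t *\<^sub>R u)) integrable_on {0..1}"
    by (rule integrable_continuous_interval[OF line_cont[OF Hc]])
  ultimately show ?thesis by (simp add: mv_integral)
qed

lemma int_t: "((\<lambda>t::real. t) has_integral 1/2) {0..1}"
proof -
  have "((\<lambda>t::real. t) has_integral ((\<lambda>t. t^2/2) 1 - (\<lambda>t. t^2/2) 0)) {0..1}"
    by (rule fundamental_theorem_of_calculus)
       (auto intro!: derivative_eq_intros simp: has_real_derivative_iff_has_vector_derivative[symmetric])
  then show ?thesis by simp
qed

lemma int_1t: "((\<lambda>t::real. 1 - t) has_integral 1/2) {0..1}"
proof -
  have "((\<lambda>t::real. 1 - t) has_integral ((\<lambda>t. t - t^2/2) 1 - (\<lambda>t. t - t^2/2) 0)) {0..1}"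
    by (rule fundamental_theorem_of_calculus)
       (auto intro!: derivative_eq_intros simp: has_real_derivative_iff_has_vector_derivative[symmetric])
  then show ?thesis by simp
qed

lemma int_direct:
  fixes p s :: "real \<Rightarrow> real"
  assumes p: "p integrable_on {0..1}" and s: "(s has_integral 1/2) {0..1}"
    and le: "\<And>t. t \<in> {0..1} \<Longrightarrow> p t \<le> (1 + c * s t) * q"
  shows "integral {0..1} p \<le> (1 + c/2) * q"
proof -
  have qI: "((\<lambda>t. q + (c * q) * s t) has_integral (q + (c*q) * (1/2))) {0..1}"
    using has_integral_add[OF has_integral_const_real[of q 0 1] has_integral_mult_right[OF s, of "c*q"]] by simp
  have pI: "(p has_integral integral {0..1} p) {0..1}" using p by (simp add: integrable_integral)
  have "integral {0..1} p \<le> q + (c*q) * (1/2)"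
    by (rule has_integral_le[OF pI qI]) (use le in \<open>auto simp add: algebra_simps\<close>)
  then show ?thesis by (simp add: algebra_simps)
qed

lemma tangent_ineq:
  fixes c y :: real
  assumes c: "c \<ge> 0" and y: "y \<ge> 0"
  shows "(1 + c - y) / (1 + c/2)^2 \<le> 1 / (1 + y)"
proof -
  have "(1 + c - y) * (1 + y) \<le> (1 + c/2)^2"
  proof -
    have "(1 + c/2)^2 - (1 + c - y) * (1 + y) = (y - c/2)^2" by (simp add: power2_eq_square algebra_simps)
    then show ?thesis using zero_le_power2[of "y - c/2"] by linarith
  qed
  moreover have m2: "(1 + c/2)^2 > 0" using c by simp
  moreover have yp: "1 + y > 0" using y by simp
  ultimately have "1 + c - y \<le> (1 + c/2)^2 / (1 + y)" by (simp add: pos_le_divide_eq)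
  then have "(1 + c - y) / (1 + c/2)^2 \<le> ((1 + c/2)^2 / (1 + y)) / (1 + c/2)^2"
    by (rule divide_right_mono) (use m2 in simp)
  also have "\<dots> = 1 / (1 + y)" using m2 by simp
  finally show ?thesis .
qed

lemma int_weighted:
  fixes p s :: "real \<Rightarrow> real"
  assumes p: "p integrable_on {0..1}" and s: "(s has_integral 1/2) {0..1}"
    and s0: "\<And>t. t \<in> {0..1} \<Longrightarrow> 0 \<le> s t" and c: "c \<ge> 0" and q: "q \<ge> 0"
    and le: "\<And>t. t \<in> {0..1} \<Longrightarrow> q \<le> (1 + c * s t) * p t"
  shows "q \<le> (1 + c/2) * integral {0..1} p"
proof -
  define m where "m = 1 + c/2"
  have mpos: "m > 0" using c by (simp add: m_def)
  define T where "T = (\<lambda>t. (q/m + q*c/(2*m^2)) - (q*c/m^2) * s t)"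
  have "(T has_integral ((q/m + q*c/(2*m^2)) - (q*c/m^2) * (1/2))) {0..1}"
    unfolding T_def
    using has_integral_diff[OF has_integral_const_real[of "q/m + q*c/(2*m^2)" 0 1] has_integral_mult_right[OF s, of "q*c/m^2"]]
    by simp
  then have TI: "(T has_integral (q/m)) {0..1}" by simp
  have Tle: "T t \<le> p t" if t: "t \<in> {0..1}" for t
  proof -
    have st: "0 \<le> s t" using s0 t by blast
    have y: "0 \<le> c * s t" using c st by simp
    have "T t = q * ((1 + c - c * s t) / m^2)"
    proof -
      have "T t = q * ((m + c/2 - c * s t) / m^2)"
        using mpos by (simp add: T_def field_simps power2_eq_square)
      then show ?thesis by (simp add: m_def)
    qed
    also have "\<dots> \<le> q * (1 / (1 + c * s t))"
      using mult_left_mono[OF tangent_ineq[OF c y] q] by (simp add: m_def)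
    also have "\<dots> \<le> p t"
      using le[OF t] y by (simp add: divide_simps mult.commute)
    finally show ?thesis .
  qed
  have "q/m \<le> integral {0..1} p"
    by (rule has_integral_le[OF TI _ Tle]) (use p in \<open>simp_all add: integrable_integral\<close>)
  then show ?thesis using mpos by (simp add: m_def divide_simps mult.commute)
qed


lemma line_bounds:
  fixes H :: "real^'n \<Rightarrow> real^'n^'n" and x u v :: "real^'n"
  assumes ssc: "strongly_self_concordant H M" and M: "M \<ge> 0"
    and psd: "\<And>y v. 0 \<le> v \<bullet> (H y *v v)"
    and Hint: "(\<lambda>t. H (x + t *\<^sub>R u)) integrable_on {0..1}"
  defines "Jx \<equiv> integral {0..1} (\<lambda>t. H (x + t *\<^sub>R u))" and "r \<equiv> local_norm H x u"
  shows "v \<bullet> (Jx *v v) \<le> (1 + M * r / 2) * (v \<bullet> (H x *v v))"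
    and "v \<bullet> (Jx *v v) \<le> (1 + M * r / 2) * (v \<bullet> (H (x + u) *v v))"
    and "v \<bullet> (H x *v v) \<le> (1 + M * r / 2) * (v \<bullet> (Jx *v v))"
    and "v \<bullet> (H (x + u) *v v) \<le> (1 + M * r / 2) * (v \<bullet> (Jx *v v))"
proof -
  define p where "p = (\<lambda>t. v \<bullet> (H (x + t *\<^sub>R u) *v v))"
  have qJ: "v \<bullet> (Jx *v v) = integral {0..1} p" unfolding Jx_def p_def by (rule qf_integral[OF Hint])
  have pint: "p integrable_on {0..1}" unfolding p_def by (rule qf_integrable[OF Hint])
  have r0: "r \<ge> 0" using psd by (simp add: r_def local_norm_def)
  have c0: "M * r \<ge> 0" using M r0 by simp
  have ln1: "local_norm H x ((x + t *\<^sub>R u) - x) = t * r" if "t \<in> {0..1}" for t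
    using that by (simp add: local_norm_scale r_def)
  have ln2: "local_norm H x ((x + t *\<^sub>R u) - (x + u)) = (1 - t) * r" if "t \<in> {0..1}" for t
  proof -
    have "(x + t *\<^sub>R u) - (x + u) = (t - 1) *\<^sub>R u" by (simp add: algebra_simps)
    then show ?thesis using that by (simp add: local_norm_scale r_def)
  qed
  have ln3: "local_norm H x (x - (x + t *\<^sub>R u)) = t * r" if "t \<in> {0..1}" for t
  proof -
    have "x - (x + t *\<^sub>R u) = - (t *\<^sub>R u)" by (simp add: algebra_simps)
    then show ?thesis using that by (simp add: local_norm_neg local_norm_scale r_def)
  qed
  have ln4: "local_norm H x ((x + u) - (x + t *\<^sub>R u)) = (1 - t) * r" if "t \<in> {0..1}" for t
  proof -
    have "(x + u) - (x + t *\<^sub>R u) = (1 - t) *\<^sub>R u" by (simp add: algebra_simps)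
    then show ?thesis using that by (simp add: local_norm_scale r_def)
  qed
  show "v \<bullet> (Jx *v v) \<le> (1 + M * r / 2) * (v \<bullet> (H x *v v))"
    unfolding qJ
  proof (rule int_direct[OF pint int_t])
    fix t :: real assume t: "t \<in> {0..1}"
    have "p t - v \<bullet> (H x *v v) \<le> M * local_norm H x ((x + t *\<^sub>R u) - x) * (v \<bullet> (H x *v v))"
      unfolding p_def by (rule ssc_qf[OF ssc])
    then show "p t \<le> (1 + M * r * t) * (v \<bullet> (H x *v v))" unfolding ln1[OF t] by (simp add: algebra_simps)
  qed
  show "v \<bullet> (Jx *v v) \<le> (1 + M * r / 2) * (v \<bullet> (H (x + u) *v v))"
    unfolding qJ
  proof (rule int_direct[OF pint int_1t])
    fix t :: real assume t: "t \<in> {0..1}"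
    have "p t - v \<bullet> (H (x + u) *v v) \<le> M * local_norm H x ((x + t *\<^sub>R u) - (x + u)) * (v \<bullet> (H (x + u) *v v))"
      unfolding p_def by (rule ssc_qf[OF ssc])
    then show "p t \<le> (1 + M * r * (1 - t)) * (v \<bullet> (H (x + u) *v v))" unfolding ln2[OF t] by (simp add: algebra_simps)
  qed
  show "v \<bullet> (H x *v v) \<le> (1 + M * r / 2) * (v \<bullet> (Jx *v v))"
    unfolding qJ
  proof (rule int_weighted[OF pint int_t _ c0 psd])
    fix t :: real assume t: "t \<in> {0..1}"
    have "v \<bullet> (H x *v v) - p t \<le> M * local_norm H x (x - (x + t *\<^sub>R u)) * p t"
      unfolding p_def by (rule ssc_qf[OF ssc])
    then show "v \<bullet> (H x *v v) \<le> (1 + M * r * t) * p t" unfolding ln3[OF t] by (simp add: algebra_simps)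
  qed auto
  show "v \<bullet> (H (x + u) *v v) \<le> (1 + M * r / 2) * (v \<bullet> (Jx *v v))"
    unfolding qJ
  proof (rule int_weighted[OF pint int_1t _ c0 psd])
    fix t :: real assume t: "t \<in> {0..1}"
    have "v \<bullet> (H (x + u) *v v) - p t \<le> M * local_norm H x ((x + u) - (x + t *\<^sub>R u)) * p t"
      unfolding p_def by (rule ssc_qf[OF ssc])
    then show "v \<bullet> (H (x + u) *v v) \<le> (1 + M * r * (1 - t)) * p t" unfolding ln4[OF t] by (simp add: algebra_simps)
  qed auto
qed


lemma prod_bound:
  fixes a :: "nat \<Rightarrow> real"
  assumes a0: "\<And>j. 0 \<le> a j" and ab: "\<And>j. j < k \<Longrightarrow> a j \<le> A * \<rho>^j"
    and \<rho>: "0 \<le> \<rho>" "\<rho> < 1" and A: "0 \<le> A" and lim: "2 * A / (1 - \<rho>) \<le> ln 3"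
  shows "(\<Prod>j<k. (1 + (if j = 0 then 0 else a (j - 1))) * (1 + a j)) \<le> 3"
proof -
  define b where "b j = (if j = 0 then 0 else a (j - 1))" for j
  have b0: "0 \<le> b j" for j using a0 by (simp add: b_def)
  have sa: "(\<Sum>j<k. a j) \<le> A / (1 - \<rho>)"
  proof -
    have "(\<Sum>j<k. a j) \<le> (\<Sum>j<k. A * \<rho>^j)" by (rule sum_mono) (simp add: ab)
    also have "\<dots> = A * ((1 - \<rho>^k) / (1 - \<rho>))" using \<rho> by (simp add: sum_distrib_left[symmetric] sum_gp_strict)
    also have "\<dots> \<le> A * (1 / (1 - \<rho>))"
      using \<rho> A by (intro mult_left_mono divide_right_mono) auto
    finally show ?thesis by simp
  qed
  have sb: "(\<Sum>j<k. b j) \<le> (\<Sum>j<k. a j)"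
  proof (cases k)
    case 0 then show ?thesis by simp
  next
    case (Suc m)
    have "(\<Sum>j<k. b j) = (\<Sum>j<m. a j)" unfolding Suc sum.lessThan_Suc_shift by (simp add: b_def)
    also have "\<dots> \<le> (\<Sum>j<k. a j)" unfolding Suc using a0 by simp
    finally show ?thesis .
  qed
  have "(\<Prod>j<k. (1 + b j) * (1 + a j)) \<le> (\<Prod>j<k. exp (b j + a j))"
  proof (rule prod_mono)
    fix j assume "j \<in> {..<k}"
    have "(1 + b j) * (1 + a j) \<le> exp (b j) * exp (a j)"
      using b0[of j] a0[of j] by (intro mult_mono) auto
    then show "0 \<le> (1 + b j) * (1 + a j) \<and> (1 + b j) * (1 + a j) \<le> exp (b j + a j)"
      using b0[of j] a0[of j] by (simp add: exp_add)
  qed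
  also have "\<dots> = exp (\<Sum>j<k. b j + a j)" by (simp add: exp_sum)
  also have "\<dots> \<le> exp (ln 3)"
  proof -
    have "(\<Sum>j<k. b j + a j) \<le> 2 * A / (1 - \<rho>)" using sa sb by (simp add: sum.distrib)
    then have "(\<Sum>j<k. b j + a j) \<le> ln 3" using lim by linarith
    then show ?thesis by (simp only: exp_le_cancel_iff)
  qed
  also have "\<dots> = 3" by simp
  finally show ?thesis by (simp add: b_def)
qed


theorem corollary2:
  fixes f :: "real^'n \<Rightarrow> real" and g :: "real^'n \<Rightarrow> real^'n"
    and H :: "real^'n \<Rightarrow> real^'n^'n"
    and \<mu> L M :: real
    and x :: "nat \<Rightarrow> real^'n" and G :: "nat \<Rightarrow> real^'n^'n"
  defines "\<kappa> \<equiv> L / \<mu>"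
    and "u \<equiv> (\<lambda>k. x (Suc k) - x k)"
  defines "r \<equiv> (\<lambda>k. local_norm H (x k) (u k))"
  defines "Gt \<equiv> (\<lambda>k. ((1 + M * (if k = 0 then 0 else r (k - 1)) / 2) * (1 + M * r k / 2)) *\<^sub>R G k)"
    and "J \<equiv> (\<lambda>k. integral {0..1} (\<lambda>t. H (x k + t *\<^sub>R u k)))"
  assumes grad: "\<And>y. (f has_derivative (\<lambda>h. g y \<bullet> h)) (at y)"
    and hess: "\<And>y. (g has_derivative (\<lambda>h. H y *v h)) (at y)"
    and mu_pos: "0 < \<mu>" and mu_L: "\<mu> \<le> L"
    and bounds: "\<And>y. loewner_le (\<mu> *\<^sub>R mat 1) (H y) \<and> loewner_le (H y) (L *\<^sub>R mat 1)"
    and M_nonneg: "0 \<le> M"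
    and ssc: "strongly_self_concordant H M"
    and G0: "G 0 = L *\<^sub>R mat 1"
    and x_step: "\<And>k. x (Suc k) = x k - matrix_inv (G k) *v g (x k)"
    and G_step: "\<And>k. G (Suc k) = SR1 (J k) (Gt k) (u k)"
    and init: "M * newton_decrement g H (x 0) \<le> ln (3 / 2) / (4 * \<kappa>)"
  shows "\<forall>k. loewner_le (J k) (Gt k) \<and> loewner_le (G k) ((3 * \<kappa>) *\<^sub>R H (x k))"
proof -
  have symH: "\<And>y. transpose (H y) = H y" by (rule hess_sym[OF grad hess])
  have lowH: "\<And>y v. \<mu> * (v \<bullet> v) \<le> v \<bullet> (H y *v v)"
    using bounds unfolding loewner_le_def by simp
  have upH: "\<And>y v. v \<bullet> (H y *v v) \<le> L * (v \<bullet> v)"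
    using bounds unfolding loewner_le_def by simp
  have psdH: "\<And>y v. 0 \<le> v \<bullet> (H y *v v)"
    using lowH mu_pos by (meson inner_ge_zero mult_nonneg_nonneg less_imp_le order_trans)
  have Lpos: "L > 0" using mu_pos mu_L by simp
  have kappa1: "\<kappa> \<ge> 1" using mu_pos mu_L by (simp add: \<kappa>_def)
  have kappaL: "L = \<kappa> * \<mu>" using mu_pos by (simp add: \<kappa>_def)
  have Hc: "continuous_on UNIV H"
    by (rule H_cont[OF symH upH psdH ssc M_nonneg]) (use Lpos in simp)
  have invH: "\<And>y. invertible (H y)" by (rule pd_invertible[OF mu_pos lowH])
  have Hint: "\<And>k. (\<lambda>t. H (x k + t *\<^sub>R u k)) integrable_on {0..1}"
    by (rule integrable_continuous_interval[OF line_cont[OF Hc]])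
  have xs: "\<And>k. x (Suc k) = x k + u k" by (simp add: u_def)
  define a where "a k = M * r k / 2" for k
  define b where "b k = (if k = 0 then 0 else a (k - 1))" for k
  define c where "c k = (1 + b k) * (1 + a k)" for k
  have LB1: "\<And>k v. v \<bullet> (J k *v v) \<le> (1 + a k) * (v \<bullet> (H (x k) *v v))"
    unfolding J_def a_def r_def by (rule line_bounds(1)[OF ssc M_nonneg psdH Hint])
  have LB2: "\<And>k v. v \<bullet> (J k *v v) \<le> (1 + a k) * (v \<bullet> (H (x (Suc k)) *v v))"
    unfolding J_def a_def r_def xs by (rule line_bounds(2)[OF ssc M_nonneg psdH Hint])
  have LB3: "\<And>k v. v \<bullet> (H (x k) *v v) \<le> (1 + a k) * (v \<bullet> (J k *v v))"
    unfolding J_def a_def r_def by (rule line_bounds(3)[OF ssc M_nonneg psdH Hint])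
  have LB4: "\<And>k v. v \<bullet> (H (x (Suc k)) *v v) \<le> (1 + a k) * (v \<bullet> (J k *v v))"
    unfolding J_def a_def r_def xs by (rule line_bounds(4)[OF ssc M_nonneg psdH Hint])
  have symJ: "\<And>k. transpose (J k) = J k" unfolding J_def by (rule tr_integral[OF Hint symH])
  have lowJ: "\<And>k v. \<mu> * (v \<bullet> v) \<le> v \<bullet> (J k *v v)"
  proof -
    fix k v
    have q: "v \<bullet> (J k *v v) = integral {0..1} (\<lambda>t. v \<bullet> (H (x k + t *\<^sub>R u k) *v v))"
      unfolding J_def by (rule qf_integral[OF Hint])
    have pI: "((\<lambda>t. v \<bullet> (H (x k + t *\<^sub>R u k) *v v)) has_integral integral {0..1} (\<lambda>t. v \<bullet> (H (x k + t *\<^sub>R u k) *v v))) {0..1}"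
      using qf_integrable[OF Hint] by (simp add: integrable_integral)
    have cI: "((\<lambda>t::real. \<mu> * (v \<bullet> v)) has_integral \<mu> * (v \<bullet> v)) {0..1}"
      using has_integral_const_real[of "\<mu> * (v \<bullet> v)" 0 1] by simp
    show "\<mu> * (v \<bullet> v) \<le> v \<bullet> (J k *v v)"
      unfolding q by (rule has_integral_le[OF cI pI]) (rule lowH)
  qed
  have psdJ: "\<And>k v. 0 \<le> v \<bullet> (J k *v v)"
    using lowJ mu_pos by (meson inner_ge_zero mult_nonneg_nonneg less_imp_le order_trans)
  have invJ: "\<And>k. invertible (J k)" by (rule pd_invertible[OF mu_pos lowJ])
  have gJ: "\<And>k. g (x (Suc k)) - g (x k) = J k *v u k"
    unfolding J_def xs by (rule g_ftc[OF hess Hc])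
  have r0: "\<And>k. 0 \<le> r k" using psdH by (simp add: r_def local_norm_def)
  have a0: "\<And>k. 0 \<le> a k" using r0 M_nonneg by (simp add: a_def)
  have b0: "\<And>k. 0 \<le> b k" using a0 by (simp add: b_def)
  have c0: "\<And>k. 0 \<le> c k" using a0 b0 by (simp add: c_def)
  have Gt_eq: "\<And>k. Gt k = c k *\<^sub>R G k"
    by (simp add: Gt_def c_def b_def a_def)
  have qGt: "\<And>k v. v \<bullet> (Gt k *v v) = c k * (v \<bullet> (G k *v v))" by (simp add: Gt_eq)
  define lam where "lam k = newton_decrement g H (x k)" for k
  define Hi where "Hi k = matrix_inv (H (x k))" for k
  have qHi: "0 \<le> w \<bullet> (matrix_inv (H y) *v w)" for y w by (rule inv_qf_nonneg[OF symH invH psdH])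
  have lam_sq: "(lam k)^2 = g (x k) \<bullet> (Hi k *v g (x k))" for k
  proof -
    have "0 \<le> g (x k) \<bullet> (matrix_inv (H (x k)) *v g (x k))" by (rule inv_qf_nonneg[OF symH invH psdH])
    then show ?thesis by (simp add: lam_def Hi_def newton_decrement_def)
  qed
  have lam0: "\<And>k. 0 \<le> lam k" using qHi by (simp add: lam_def newton_decrement_def)
  define \<delta> where "\<delta> = M * lam 0"
  define \<rho> where "\<rho> = 1 - 1 / (4 * \<kappa>)"
  define P where "P k = (\<Prod>j<k. c j)" for k
  have \<delta>0: "0 \<le> \<delta>" using M_nonneg lam0 by (simp add: \<delta>_def)
  have ln32: "ln (3/2::real) \<le> 1/2" using ln_le_minus_one[of "3/2::real"] by simp
  have \<delta>1: "\<delta> \<le> ln (3/2) / (4 * \<kappa>)" using init by (simp add: \<delta>_def lam_def)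
  have \<delta>2: "\<delta> \<le> 1 / (8 * \<kappa>)"
  proof -
    have "ln (3/2) / (4 * \<kappa>) \<le> (1/2) / (4 * \<kappa>)" using ln32 kappa1 by (intro divide_right_mono) auto
    then show ?thesis using \<delta>1 by simp
  qed
  have \<delta>3: "\<delta> \<le> 1/8"
  proof -
    have "1 / (8 * \<kappa>) \<le> 1/8" using kappa1 by (simp add: field_simps)
    then show ?thesis using \<delta>2 by linarith
  qed
  have \<rho>0: "0 \<le> \<rho>" "\<rho> < 1" using kappa1 by (simp_all add: \<rho>_def field_simps)
  have Pb: "P k \<le> 3" if ab: "\<And>j. j < k \<Longrightarrow> a j \<le> (9/16) * \<delta> * \<rho>^j" for k
  proof -
    have lim: "2 * ((9/16) * \<delta>) / (1 - \<rho>) \<le> ln 3"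
    proof -
      have "2 * ((9/16) * \<delta>) / (1 - \<rho>) = (9/2) * \<kappa> * \<delta>" using kappa1 by (simp add: \<rho>_def field_simps)
      also have "\<dots> \<le> (9/2) * \<kappa> * (ln (3/2) / (4 * \<kappa>))" using \<delta>1 kappa1 by (intro mult_left_mono) auto
      also have "\<dots> = (9/8) * ln (3/2)" using kappa1 by (simp add: field_simps)
      also have "\<dots> \<le> ln 3"
      proof -
        have "ln (3::real) = ln (3/2) + ln 2" using ln_mult[of "3/2::real" 2] by simp
        moreover have "ln (3/2::real) \<le> ln 2" by simp
        moreover have "0 \<le> ln (3/2::real)" by simp
        ultimately show ?thesis by linarith
      qed
      finally show ?thesis .
    qed
    have "P k = (\<Prod>j<k. (1 + (if j = 0 then 0 else a (j - 1))) * (1 + a j))"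
      by (simp add: P_def c_def b_def)
    also have "\<dots> \<le> 3"
      by (rule prod_bound[OF a0 ab \<rho>0]) (use \<delta>0 lim in auto)
    finally show ?thesis .
  qed
  define Inv where "Inv k \<longleftrightarrow> transpose (G k) = G k \<and>
      (\<forall>v. v \<bullet> (H (x k) *v v) \<le> (1 + b k) * (v \<bullet> (G k *v v))) \<and>
      (\<forall>v. v \<bullet> (G k *v v) \<le> P k * L * (v \<bullet> v))" for k
  have claim1: "v \<bullet> (J k *v v) \<le> v \<bullet> (Gt k *v v)" if "Inv k" for k v
  proof -
    have "v \<bullet> (J k *v v) \<le> (1 + a k) * (v \<bullet> (H (x k) *v v))" by (rule LB1)
    also have "\<dots> \<le> (1 + a k) * ((1 + b k) * (v \<bullet> (G k *v v)))"
      using that a0[of k] by (intro mult_left_mono) (auto simp: Inv_def)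
    also have "\<dots> = v \<bullet> (Gt k *v v)" by (simp add: qGt c_def)
    finally show ?thesis .
  qed
  have claim2: "v \<bullet> (G k *v v) \<le> (3 * \<kappa>) * (v \<bullet> (H (x k) *v v))" if "Inv k" "P k \<le> 3" for k v
  proof -
    have "v \<bullet> (G k *v v) \<le> P k * L * (v \<bullet> v)" using that by (simp add: Inv_def)
    also have "\<dots> \<le> 3 * L * (v \<bullet> v)" using that Lpos by (intro mult_right_mono) auto
    also have "\<dots> = (3 * \<kappa>) * (\<mu> * (v \<bullet> v))" by (simp add: kappaL)
    also have "\<dots> \<le> (3 * \<kappa>) * (v \<bullet> (H (x k) *v v))" using kappa1 lowH by (intro mult_left_mono) auto
    finally show ?thesis .
  qed
  define Q where "Q k \<longleftrightarrow> Inv k \<and> M * lam k \<le> \<delta> * \<rho>^k \<and> (\<forall>j<k. a j \<le> (9/16) * \<delta> * \<rho>^j)" for k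
  have Q0: "Q 0"
    unfolding Q_def Inv_def
    using upH by (simp add: G0 b_def P_def \<delta>_def transpose_scalar)
  have step: "Q (Suc k)" if Qk: "Q k" for k
  proof -
    have Ik: "Inv k" and lamk: "M * lam k \<le> \<delta> * \<rho>^k" and abk: "\<And>j. j < k \<Longrightarrow> a j \<le> (9/16) * \<delta> * \<rho>^j"
      using Qk by (auto simp: Q_def)
    have symG: "transpose (G k) = G k" and HG: "\<And>v. v \<bullet> (H (x k) *v v) \<le> (1 + b k) * (v \<bullet> (G k *v v))"
      and GP: "\<And>v. v \<bullet> (G k *v v) \<le> P k * L * (v \<bullet> v)"
      using Ik by (auto simp: Inv_def)
    have \<rho>pow: "\<And>j. \<rho>^j \<le> 1" using \<rho>0 by (simp add: power_le_one)
    have bk: "b k \<le> 1/8"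
    proof (cases k)
      case 0 then show ?thesis by (simp add: b_def)
    next
      case (Suc m)
      have "a m \<le> (9/16) * \<delta> * \<rho>^m" using abk Suc by simp
      also have "\<dots> \<le> (9/16) * \<delta> * 1" using \<rho>pow \<delta>0 by (intro mult_left_mono) auto
      finally show ?thesis using \<delta>3 Suc by (simp add: b_def)
    qed
    have Pk: "P k \<le> 3" by (rule Pb) (use abk in auto)
    have GH: "\<And>v. v \<bullet> (G k *v v) \<le> (3 * \<kappa>) * (v \<bullet> (H (x k) *v v))" by (rule claim2[OF Ik Pk])
    have lowG: "\<And>v. (\<mu> / (1 + b k)) * (v \<bullet> v) \<le> v \<bullet> (G k *v v)"
    proof -
      fix v
      have "\<mu> * (v \<bullet> v) \<le> (1 + b k) * (v \<bullet> (G k *v v))" using lowH[of v "x k"] HG[of v] by linarith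
      then show "(\<mu> / (1 + b k)) * (v \<bullet> v) \<le> v \<bullet> (G k *v v)" using b0[of k] by (simp add: field_simps)
    qed
    have invG: "invertible (G k)" by (rule pd_invertible[OF _ lowG]) (use mu_pos b0[of k] in simp)
    define gk where "gk = g (x k)"
    define z where "z = matrix_inv (G k) *v gk"
    have Gz: "G k *v z = gk" by (simp add: z_def inv_vec[OF invG])
    have uk: "u k = - z" by (simp add: u_def x_step z_def gk_def)
    have Gu: "G k *v u k = - gk" by (simp add: uk mv_neg Gz)
    have rk2: "(r k)^2 = u k \<bullet> (H (x k) *v u k)" using psdH by (simp add: r_def local_norm_def)
    have cs: "(u k \<bullet> gk)^2 \<le> (r k)^2 * (lam k)^2"
    proof -
      define w where "w = Hi k *v gk"
      have Hw: "H (x k) *v w = gk" by (simp add: w_def Hi_def inv_vec[OF invH])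
      have "(u k \<bullet> (H (x k) *v w))^2 \<le> (u k \<bullet> (H (x k) *v u k)) * (w \<bullet> (H (x k) *v w))"
        by (rule psd_cs[OF symH psdH])
      moreover have "w \<bullet> (H (x k) *v w) = (lam k)^2" unfolding Hw by (simp add: lam_sq gk_def w_def inner_commute)
      ultimately show ?thesis by (simp add: Hw rk2)
    qed
    have rlam: "r k \<le> (1 + b k) * lam k"
    proof -
      have "(r k)^2 \<le> (1 + b k) * (u k \<bullet> (G k *v u k))" unfolding rk2 by (rule HG)
      also have "u k \<bullet> (G k *v u k) = - (u k \<bullet> gk)" by (simp add: Gu)
      also have "- (u k \<bullet> gk) \<le> r k * lam k"
      proof -
        have "\<bar>u k \<bullet> gk\<bar> \<le> r k * lam k"
          using cs r0[of k] lam0[of k] by (metis abs_le_square_iff abs_of_nonneg power_mult_distrib mult_nonneg_nonneg)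
        then show ?thesis by linarith
      qed
      then have "(1 + b k) * - (u k \<bullet> gk) \<le> (1 + b k) * (r k * lam k)" using b0[of k] by (intro mult_left_mono) auto
      finally have "(r k) * (r k) \<le> (r k) * ((1 + b k) * lam k)" by (simp add: power2_eq_square algebra_simps)
      then show ?thesis using r0[of k] b0[of k] lam0[of k]
        by (cases "r k = 0") (auto simp: mult_le_cancel_left)
    qed
    have ak: "a k \<le> (9/16) * (M * lam k)"
    proof -
      have "a k \<le> M * ((1 + b k) * lam k) / 2" using rlam M_nonneg by (simp add: a_def mult_left_mono divide_right_mono)
      also have "\<dots> = ((1 + b k) / 2) * (M * lam k)" by simp
      also have "\<dots> \<le> (9/16) * (M * lam k)" using bk M_nonneg lam0[of k] by (intro mult_right_mono) auto
      finally show ?thesis .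
    qed
    have ak2: "a k \<le> (9/16) * \<delta> * \<rho>^k" using ak lamk by simp
    have ak3: "a k \<le> 9 / (128 * \<kappa>)"
    proof -
      have "a k \<le> (9/16) * \<delta>" using ak2 \<rho>pow[of k] \<delta>0 mult_left_mono[of "\<rho>^k" 1 "(9/16) * \<delta>"] by simp
      also have "\<dots> \<le> (9/16) * (1 / (8 * \<kappa>))" using \<delta>2 by simp
      finally show ?thesis by simp
    qed
    have "9 / (128 * \<kappa>) \<le> 9 / 128" by (rule divide_left_mono) (use kappa1 in auto)
    then have ak4: "a k \<le> 9/128" using ak3 by linarith
    define \<theta> where "\<theta> = 1 - 1 / (3 * \<kappa> * (1 + a k))"
    have k1a: "1 \<le> \<kappa> * (1 + a k)" using kappa1 a0[of k] mult_mono[of 1 \<kappa> 1 "1 + a k"] by simp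
    have th1: "1 / (3 * \<kappa> * (1 + a k)) \<le> 1/3" by (rule divide_left_mono) (use k1a in auto)
    have th: "0 \<le> \<theta>" "\<theta> < 1" using th1 kappa1 a0[of k] by (simp_all add: \<theta>_def)
    have th2: "1 / (1 - \<theta>) = 3 * \<kappa> * (1 + a k)" by (simp add: \<theta>_def)
    have ck: "c k \<le> 1 + \<theta>"
    proof -
      have "c k \<le> (1 + 1/8) * (1 + 9/128)" unfolding c_def using bk ak4 a0[of k] b0[of k] by (intro mult_mono) auto
      also have "\<dots> \<le> 1 + 2/3" by simp
      also have "\<dots> \<le> 1 + \<theta>" using th1 by (simp add: \<theta>_def)
      finally show ?thesis .
    qed
    have lo: "\<And>v. (1 / (1 + \<theta>)) * (v \<bullet> (J k *v v)) \<le> v \<bullet> (G k *v v)"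
    proof -
      fix v
      have "v \<bullet> (J k *v v) \<le> c k * (v \<bullet> (G k *v v))" using claim1[OF Ik, of v] by (simp add: qGt)
      also have "\<dots> \<le> (1 + \<theta>) * (v \<bullet> (G k *v v))"
      proof (rule mult_right_mono[OF ck])
        show "0 \<le> v \<bullet> (G k *v v)" using lowG[of v] mu_pos b0[of k] by (meson inner_ge_zero divide_nonneg_nonneg mult_nonneg_nonneg less_imp_le order_trans add_nonneg_nonneg zero_le_one)
      qed
      finally show "(1 / (1 + \<theta>)) * (v \<bullet> (J k *v v)) \<le> v \<bullet> (G k *v v)" using th by (simp add: field_simps)
    qed
    have hi: "\<And>v. v \<bullet> (G k *v v) \<le> (1 / (1 - \<theta>)) * (v \<bullet> (J k *v v))"
    proof -
      fix v
      have "v \<bullet> (G k *v v) \<le> (3 * \<kappa>) * (v \<bullet> (H (x k) *v v))" by (rule GH)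
      also have "\<dots> \<le> (3 * \<kappa>) * ((1 + a k) * (v \<bullet> (J k *v v)))" using kappa1 LB3 by (intro mult_left_mono) auto
      finally show "v \<bullet> (G k *v v) \<le> (1 / (1 - \<theta>)) * (v \<bullet> (J k *v v))" by (simp add: th2)
    qed
    define gn where "gn = g (x (Suc k))"
    have gn_eq: "G k *v z - J k *v z = gn"
    proof -
      have "gn = gk + J k *v u k" using gJ[of k] by (simp add: gn_def gk_def algebra_simps)
      then show ?thesis by (simp add: Gz uk mv_neg)
    qed
    have contr0: "gn \<bullet> (matrix_inv (J k) *v gn) \<le> \<theta>^2 * ((G k *v z) \<bullet> (matrix_inv (J k) *v (G k *v z)))"
      using contraction[OF symJ symG invJ psdJ th lo hi, of z] unfolding gn_eq .
    then have contr: "gn \<bullet> (matrix_inv (J k) *v gn) \<le> \<theta>^2 * (gk \<bullet> (matrix_inv (J k) *v gk))"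
      unfolding Gz .
    have m1: "gk \<bullet> (matrix_inv (J k) *v gk) \<le> (1 + a k) * (lam k)^2"
    proof -
      have "gk \<bullet> (matrix_inv (J k) *v gk) \<le> (1 + a k) * (gk \<bullet> (matrix_inv (H (x k)) *v gk))"
        by (rule inv_mono[OF symH symJ invH invJ psdH LB3]) (use a0[of k] in simp)
      then show ?thesis by (simp add: lam_sq Hi_def gk_def)
    qed
    have m2: "(lam (Suc k))^2 \<le> (1 + a k) * (gn \<bullet> (matrix_inv (J k) *v gn))"
    proof -
      have "gn \<bullet> (matrix_inv (H (x (Suc k))) *v gn) \<le> (1 + a k) * (gn \<bullet> (matrix_inv (J k) *v gn))"
        by (rule inv_mono[OF symJ symH invJ invH psdJ LB2]) (use a0[of k] in simp)
      then show ?thesis by (simp add: lam_sq Hi_def gn_def)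
    qed
    have "(lam (Suc k))^2 \<le> ((1 + a k) * \<theta> * lam k)^2"
    proof -
      have "(lam (Suc k))^2 \<le> (1 + a k) * (\<theta>^2 * (gk \<bullet> (matrix_inv (J k) *v gk)))"
        using m2 contr a0[of k] by (meson add_nonneg_nonneg mult_left_mono order_trans zero_le_one)
      also have "\<dots> \<le> (1 + a k) * (\<theta>^2 * ((1 + a k) * (lam k)^2))"
        using m1 a0[of k] by (intro mult_left_mono) auto
      also have "\<dots> = ((1 + a k) * \<theta> * lam k)^2" by (simp add: power2_eq_square algebra_simps)
      finally show ?thesis .
    qed
    then have lamS: "lam (Suc k) \<le> (1 + a k) * \<theta> * lam k"
      by (rule power2_le_imp_le) (use a0[of k] th lam0[of k] in simp)
    have rate: "(1 + a k) * \<theta> \<le> \<rho>"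
    proof -
      have kp: "0 < \<kappa>" using kappa1 by simp
      have a1: "1 + a k \<noteq> 0" using a0[of k] by simp
      have e1: "(1 + a k) * \<theta> = (1 + a k) - (1 + a k) / (3 * \<kappa> * (1 + a k))"
        by (simp add: \<theta>_def right_diff_distrib)
      have e2: "(1 + a k) / (3 * \<kappa> * (1 + a k)) = 1 / (3 * \<kappa>)" using a1 by simp
      have e3: "9 / (128 * \<kappa>) \<le> 1 / (3 * \<kappa>) - 1 / (4 * \<kappa>)" using kp by (simp add: field_simps)
      have "(1 + a k) * \<theta> = 1 + a k - 1 / (3 * \<kappa>)" unfolding e1 e2 by simp
      also have "\<dots> \<le> 1 - 1 / (4 * \<kappa>)" using ak3 e3 by linarith
      finally show ?thesis by (simp add: \<rho>_def)
    qed
    have lamS2: "M * lam (Suc k) \<le> \<delta> * \<rho>^(Suc k)"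
    proof -
      have "M * lam (Suc k) \<le> M * ((1 + a k) * \<theta> * lam k)" using lamS M_nonneg by (rule mult_left_mono)
      also have "\<dots> = ((1 + a k) * \<theta>) * (M * lam k)" by simp
      also have "\<dots> \<le> \<rho> * (M * lam k)" using rate M_nonneg lam0[of k] by (intro mult_right_mono) auto
      also have "\<dots> \<le> \<rho> * (\<delta> * \<rho>^k)" using lamk \<rho>0 by (intro mult_left_mono) auto
      also have "\<dots> = \<delta> * \<rho>^(Suc k)" by (simp add: algebra_simps)
      finally show ?thesis .
    qed
    have symGt: "transpose (Gt k) = Gt k" by (simp add: Gt_eq transpose_scalar symG)
    have JGt: "\<And>v. v \<bullet> (J k *v v) \<le> v \<bullet> (Gt k *v v)" by (rule claim1[OF Ik])
    note S = SR1_props[OF symJ symGt JGt, where u = "u k"]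
    have I1: "transpose (G (Suc k)) = G (Suc k)" using S(1) by (simp add: G_step)
    have I2: "v \<bullet> (H (x (Suc k)) *v v) \<le> (1 + b (Suc k)) * (v \<bullet> (G (Suc k) *v v))" for v
    proof -
      have "v \<bullet> (H (x (Suc k)) *v v) \<le> (1 + a k) * (v \<bullet> (J k *v v))" by (rule LB4)
      also have "\<dots> \<le> (1 + a k) * (v \<bullet> (G (Suc k) *v v))"
        using S(2)[of v] a0[of k] by (simp add: G_step mult_left_mono)
      finally show ?thesis by (simp add: b_def)
    qed
    have I3: "v \<bullet> (G (Suc k) *v v) \<le> P (Suc k) * L * (v \<bullet> v)" for v
    proof -
      have "v \<bullet> (G (Suc k) *v v) \<le> v \<bullet> (Gt k *v v)" using S(3)[of v] by (simp add: G_step)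
      also have "\<dots> = c k * (v \<bullet> (G k *v v))" by (rule qGt)
      also have "\<dots> \<le> c k * (P k * L * (v \<bullet> v))" using GP c0 by (intro mult_left_mono)
      also have "\<dots> = P (Suc k) * L * (v \<bullet> v)" by (simp add: P_def)
      finally show ?thesis .
    qed
    have "\<forall>j<Suc k. a j \<le> (9/16) * \<delta> * \<rho>^j" using abk ak2 less_Suc_eq by auto
    then show ?thesis using I1 I2 I3 lamS2 by (simp add: Q_def Inv_def)
  qed
  have allQ: "Q k" for k
    by (induction k) (use Q0 step in auto)
  show ?thesis
  proof
    fix k
    have Ik: "Inv k" using allQ[of k] by (simp add: Q_def)
    have Pk: "P k \<le> 3" by (rule Pb) (use allQ[of k] in \<open>auto simp: Q_def\<close>)
    have "loewner_le (J k) (Gt k)" unfolding loewner_le_def using claim1[OF Ik] by blast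
    moreover have "loewner_le (G k) ((3 * \<kappa>) *\<^sub>R H (x k))"
      unfolding loewner_le_def using claim2[OF Ik Pk] by simp
    ultimately show "loewner_le (J k) (Gt k) \<and> loewner_le (G k) ((3 * \<kappa>) *\<^sub>R H (x k))" ..
  qed
qed

end
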